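(* Let $X\subset\mathbb{R}$ be either a finite set or a compact interval $[\underline x,\bar x]$, let $\Delta(X)$ be the set of Borel probability measures on $X$ with the weak$^*$ topology, and let $\Theta=[\underline\theta,\bar\theta]$. Let $u:\mathbb{R}\to\mathbb{R}$ be strictly increasing, continuous and weakly concave. Let $C:\Theta\times\Delta(X)\to\mathbb{R}$ be bounded, with $C(\theta,\cdot)$ weak$^*$-continuous and convex for every $\theta$, and satisfying: (i) for every $\theta$, if $\mu'$ first-order stochastically dominates $\mu$ then $C(\theta,\mu')\ge C(\theta,\mu)$; (ii) for every $(\theta,\mu)$ there is a continuous $c_\mu(\theta,\cdot):X\to\mathbb{R}$ with $\lim_{\varepsilon\searrow0}\big(C(\theta,(1-\varepsilon)\mu+\varepsilon\mu')-C(\theta,\mu)\big)/\varepsilon=\int_X c_\mu(\theta,x)\,[\mu'-\mu](\mathrm{d}x)$ for all $\mu'\in\Delta(X)$; (iii) for every $\mu$, $C(\cdot,\mu)$ is strictly decreasing and continuously differentiable, and for every $\theta$, $\sup_{\mu\in\Delta(X)}|\partial C(\theta,\mu)/\partial\theta|<\infty$. For a measurable wage $w:X\to\mathbb{R}$ bounded above, define $U(\theta,w,\mu)=\int_X u(w(x))\,\mu(\mathrm{d}x)-C(\theta,\mu)$. Let $\{w_\theta,\mu_\theta\}_{\theta\in\Theta}$ be a mechanism (each $w_\theta:X\to\mathbb{R}$ measurable and bounded above, each $\mu_\theta\in\Delta(X)$) that is incentive compatible, i.e. $U(\theta,w_\theta,\mu_\theta)\ge U(\theta,w_{\hat\theta},\mu')$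 for all $\theta,\hat\theta\in\Theta$ and all $\mu'\in\Delta(X)$. Then there exist wages $\{\bar w_\theta\}_{\theta\in\Theta}$ such that for all $\theta$ the function $\bar w_\theta:X\to\mathbb{R}$ is non-decreasing and right-continuous, the mechanism $\{\bar w_\theta,\mu_\theta\}_{\theta\in\Theta}$ is incentive compatible, and $\mu_\theta(\{x:\bar w_\theta(x)\neq w_\theta(x)\})=0$ for all $\theta\in\Theta$.
   Context: Interpretation: an agent of private type $\theta$ reports a type $\hat\theta$, receives contract $w_{\hat\theta}$, and then chooses an output distribution $\mu\in\Delta(X)$ at cost $C(\theta,\mu)$; output $x\sim\mu$ is realized and the agent is paid $w_{\hat\theta}(x)$. Incentive compatibility requires that truthful reporting together with choosing $\mu_\theta$ is optimal against all joint deviations in report and action. *)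

theory Defs
  imports "HOL-Probability.Probability"
begin

text \<open>Delta X: Borel probability measures on the real line concentrated on X
  (identified with Borel probability measures on X).\<close>
definition Delta :: "real set \<Rightarrow> real measure set" where
  "Delta X = {M. sets M = sets (borel :: real measure) \<and> prob_space M \<and> emeasure M X = 1}"

definition mix :: "real \<Rightarrow> real measure \<Rightarrow> real measure \<Rightarrow> real measure" where
  "mix t M N = measure_of UNIV (sets (borel :: real measure))
      (\<lambda>A. ennreal (1 - t) * emeasure M A + ennreal t * emeasure N A)"

text \<open>Weak* convergence of a sequence in Delta X (X compact, so every continuous
  function on X is bounded).\<close>
definition weak_conv_on :: "real set \<Rightarrow> (nat \<Rightarrow> real measure) \<Rightarrow> real measure \<Rightarrow> bool" where
  "weak_conv_on X Ms M \<longleftrightarrow>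
     (\<forall>f :: real \<Rightarrow> real. continuous_on X f \<longrightarrow>
        (\<lambda>n. (LINT x:X|Ms n. f x)) \<longlonglongrightarrow> (LINT x:X|M. f x))"

definition fosd :: "real measure \<Rightarrow> real measure \<Rightarrow> bool" where
  "fosd N M \<longleftrightarrow> (\<forall>t. measure N {..t} \<le> measure M {..t})"

text \<open>Integral of a function bounded above, with value -\<infinity> when not integrable.\<close>
definition ext_int :: "real set \<Rightarrow> real measure \<Rightarrow> (real \<Rightarrow> real) \<Rightarrow> ereal" where
  "ext_int X M f = (if set_integrable M X f then ereal (LINT x:X|M. f x) else - \<infinity>)"

definition Util :: "real set \<Rightarrow> (real \<Rightarrow> real) \<Rightarrow> (real \<Rightarrow> real measure \<Rightarrow> real)
    \<Rightarrow> real \<Rightarrow> (real \<Rightarrow> real) \<Rightarrow> real measure \<Rightarrow> ereal" where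
  "Util X u C \<theta> w M = ext_int X M (\<lambda>x. u (w x)) - ereal (C \<theta> M)"

definition mechanism :: "real set \<Rightarrow> real set \<Rightarrow> (real \<Rightarrow> real \<Rightarrow> real) \<Rightarrow> (real \<Rightarrow> real measure) \<Rightarrow> bool" where
  "mechanism X \<Theta> w \<mu> \<longleftrightarrow>
     (\<forall>\<theta>\<in>\<Theta>. w \<theta> \<in> borel_measurable (restrict_space borel X)
        \<and> (\<exists>B. \<forall>x\<in>X. w \<theta> x \<le> B) \<and> \<mu> \<theta> \<in> Delta X)"

definition incentive_compatible :: "real set \<Rightarrow> (real \<Rightarrow> real) \<Rightarrow> (real \<Rightarrow> real measure \<Rightarrow> real)
    \<Rightarrow> real set \<Rightarrow> (real \<Rightarrow> real \<Rightarrow> real) \<Rightarrow> (real \<Rightarrow> real measure) \<Rightarrow> bool" where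
  "incentive_compatible X u C \<Theta> w \<mu> \<longleftrightarrow>
     mechanism X \<Theta> w \<mu> \<and>
     (\<forall>\<theta>\<in>\<Theta>. \<forall>\<theta>'\<in>\<Theta>. \<forall>M'\<in>Delta X.
        Util X u C \<theta> (w \<theta>') M' \<le> Util X u C \<theta> (w \<theta>) (\<mu> \<theta>))"

end

theory Submission
  imports Defs
begin

lemma mix_emeasure:
  assumes t: "0 \<le> t" "t \<le> 1" and M: "sets M = sets borel" and N: "sets N = sets borel"
    and A: "A \<in> sets borel"
  shows "emeasure (mix t M N) A = ennreal (1 - t) * emeasure M A + ennreal t * emeasure N A"
  unfolding mix_def
proof (rule emeasure_measure_of_sigma)
  show "sigma_algebra UNIV (sets borel)"
    using sets.sigma_algebra_axioms[of borel] by simp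
  show "positive (sets borel) (\<lambda>A. ennreal (1 - t) * emeasure M A + ennreal t * emeasure N A)"
    by (simp add: positive_def)
  show "countably_additive (sets borel) (\<lambda>A. ennreal (1 - t) * emeasure M A + ennreal t * emeasure N A)"
  proof (rule countably_additiveI)
    fix B :: "nat \<Rightarrow> real set" assume B: "range B \<subseteq> sets borel" "disjoint_family B"
    have "(\<Sum>i. ennreal (1 - t) * emeasure M (B i) + ennreal t * emeasure N (B i))
        = (\<Sum>i. ennreal (1 - t) * emeasure M (B i)) + (\<Sum>i. ennreal t * emeasure N (B i))"
      by (rule suminf_add[symmetric]) auto
    also have "\<dots> = ennreal (1 - t) * (\<Sum>i. emeasure M (B i)) + ennreal t * (\<Sum>i. emeasure N (B i))"
      by (simp add: ennreal_suminf_cmult)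
    also have "\<dots> = ennreal (1 - t) * emeasure M (\<Union>i. B i) + ennreal t * emeasure N (\<Union>i. B i)"
      using B M N by (simp add: suminf_emeasure)
    finally show "(\<Sum>i. ennreal (1 - t) * emeasure M (B i) + ennreal t * emeasure N (B i))
        = ennreal (1 - t) * emeasure M (\<Union>i. B i) + ennreal t * emeasure N (\<Union>i. B i)" .
  qed
qed (rule A)

lemma sets_mix[simp]: "sets (mix t M N) = sets borel"
  unfolding mix_def
  by (metis sets.sigma_sets_eq sets_measure_of space_borel sets.space_closed)

lemma space_mix[simp]: "space (mix t M N) = UNIV"
  using sets_eq_imp_space_eq[OF sets_mix] by simp

lemma mix_nn_integral:
  assumes t: "0 \<le> t" "t \<le> 1" and M: "sets M = sets borel" and N: "sets N = sets borel"
    and f: "f \<in> borel_measurable borel"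
  shows "(\<integral>\<^sup>+x. f x \<partial>mix t M N) = ennreal (1 - t) * (\<integral>\<^sup>+x. f x \<partial>M) + ennreal t * (\<integral>\<^sup>+x. f x \<partial>N)"
  using f
proof (induction rule: borel_measurable_induct)
  case (cong f g)
  have sM: "space M = UNIV" "space N = UNIV" using sets_eq_imp_space_eq[OF M] sets_eq_imp_space_eq[OF N] by auto
  from cong show ?case
    by (simp add: sM cong(3))
next
  case (set A)
  then show ?case using mix_emeasure[OF t M N, of A] M N by simp
next
  case (mult u c)
  have m1: "u \<in> borel_measurable (mix t M N)" "u \<in> borel_measurable M" "u \<in> borel_measurable N"
    using mult(2) M N by (auto simp: measurable_def)
  show ?case using mult m1
    by (simp add: nn_integral_cmult algebra_simps)
next
  case (add u v)
  have m1: "u \<in> borel_measurable (mix t M N)" "u \<in> borel_measurable M" "u \<in> borel_measurable N"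
    "v \<in> borel_measurable (mix t M N)" "v \<in> borel_measurable M" "v \<in> borel_measurable N"
    using add M N by (auto simp: measurable_def)
  show ?case using add m1
    by (simp add: nn_integral_add algebra_simps distrib_left)
next
  case (seq U)
  have m1: "\<And>i. U i \<in> borel_measurable (mix t M N)" "\<And>i. U i \<in> borel_measurable M" "\<And>i. U i \<in> borel_measurable N"
    using seq M N by (auto simp: measurable_def)
  have eq: "\<And>Mx. (\<integral>\<^sup>+x. (SUP i. U i) x \<partial>Mx) = (\<integral>\<^sup>+x. (SUP i. U i x) \<partial>Mx)"
    by (simp add: image_comp)
  have "(\<integral>\<^sup>+x. (SUP i. U i) x \<partial>mix t M N) = (SUP i. integral\<^sup>N (mix t M N) (U i))"
    unfolding eq by (rule nn_integral_monotone_convergence_SUP[OF seq(3) m1(1)])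
  also have "\<dots> = (SUP i. ennreal (1 - t) * integral\<^sup>N M (U i) + ennreal t * integral\<^sup>N N (U i))"
    using seq by simp
  also have "\<dots> = (SUP i. ennreal (1 - t) * integral\<^sup>N M (U i)) + (SUP i. ennreal t * integral\<^sup>N N (U i))"
    using seq m1 by (intro ennreal_SUP_add) (auto intro!: mult_left_mono nn_integral_mono simp: incseq_def le_fun_def)
  also have "\<dots> = ennreal (1 - t) * (SUP i. integral\<^sup>N M (U i)) + ennreal t * (SUP i. integral\<^sup>N N (U i))"
    by (simp add: SUP_mult_left_ennreal)
  also have "\<dots> = ennreal (1 - t) * (\<integral>\<^sup>+x. (SUP i. U i) x \<partial>M) + ennreal t * (\<integral>\<^sup>+x. (SUP i. U i) x \<partial>N)"
    unfolding eq by (simp add: nn_integral_monotone_convergence_SUP[OF seq(3) m1(2)]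
       nn_integral_monotone_convergence_SUP[OF seq(3) m1(3)])
  finally show ?case .
qed

lemma DeltaD:
  assumes "M \<in> Delta X"
  shows "sets M = sets borel" "prob_space M" "emeasure M X = 1" "space M = UNIV"
  using assms sets_eq_imp_space_eq[of M borel] by (auto simp: Delta_def)

lemma Delta_AE:
  assumes "M \<in> Delta X" "X \<in> sets borel"
  shows "AE x in M. x \<in> X"
proof -
  interpret prob_space M using DeltaD[OF assms(1)] by simp
  have "X \<in> events" using assms DeltaD by simp
  then show ?thesis using DeltaD[OF assms(1)]
    by (subst AE_in_set_eq_1) (auto simp: emeasure_eq_measure)
qed

lemma return_Delta:
  assumes "x \<in> X" "X \<in> sets borel"
  shows "return borel x \<in> Delta X"
  using assms by (auto simp: Delta_def prob_space_return)

lemma mix_measure: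
  assumes t: "0 \<le> t" "t \<le> 1" and M: "prob_space M" "sets M = sets borel"
    and N: "prob_space N" "sets N = sets borel" and A: "A \<in> sets borel"
  shows "measure (mix t M N) A = (1 - t) * measure M A + t * measure N A"
proof -
  interpret M: prob_space M by fact
  interpret N: prob_space N by fact
  have "measure (mix t M N) A = enn2real (ennreal (1 - t) * emeasure M A + ennreal t * emeasure N A)"
    unfolding measure_def using mix_emeasure[OF t M(2) N(2) A] by simp
  also have "\<dots> = (1 - t) * measure M A + t * measure N A"
    using M N t
    by (subst enn2real_plus) (auto simp: enn2real_mult M.emeasure_eq_measure N.emeasure_eq_measure ennreal_mult_less_top
          ennreal_mult[symmetric] simp del: ennreal_mult')
  finally show ?thesis .
qed

lemma mix_Delta:
  assumes t: "0 \<le> t" "t \<le> 1" and M: "M \<in> Delta X" and N: "N \<in> Delta X"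
    and X: "X \<in> sets borel"
  shows "mix t M N \<in> Delta X"
proof -
  have e: "emeasure (mix t M N) A = ennreal (1 - t) * emeasure M A + ennreal t * emeasure N A"
    if "A \<in> sets borel" for A
    using mix_emeasure[OF t DeltaD(1)[OF M] DeltaD(1)[OF N] that] .
  have pM: "emeasure M UNIV = 1" "emeasure N UNIV = 1"
    using DeltaD[OF M] DeltaD[OF N] prob_space.emeasure_space_1 by metis+
  have one: "ennreal (1 - t) + ennreal t = 1"
  proof -
    have "ennreal (1 - t) + ennreal t = ennreal ((1 - t) + t)"
      by (rule ennreal_plus[symmetric]) (use t in auto)
    then show ?thesis by (metis mult.right_neutral diff_add_cancel ennreal_1)
  qed
  have "prob_space (mix t M N)"
    by (rule prob_spaceI) (simp add: e pM one)
  moreover have "emeasure (mix t M N) X = 1"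
    using X DeltaD(3)[OF M] DeltaD(3)[OF N] by (simp add: e one)
  ultimately show ?thesis by (simp add: Delta_def)
qed

lemma distr_Delta:
  assumes M: "M \<in> Delta X" and X: "X \<in> sets borel"
    and T: "T \<in> borel_measurable borel" and TX: "\<And>x. x \<in> X \<Longrightarrow> T x \<in> X"
  shows "distr M borel T \<in> Delta X"
proof -
  interpret prob_space M using DeltaD[OF M] by simp
  have T': "T \<in> measurable M borel" using T DeltaD(1)[OF M] by (simp add: measurable_def)
  have "emeasure (distr M borel T) X = emeasure M (T -` X \<inter> space M)"
    using T' X by (simp add: emeasure_distr)
  moreover have "emeasure M X \<le> emeasure M (T -` X \<inter> space M)"
    using TX T' X DeltaD[OF M] measurable_sets[OF T X] by (intro emeasure_mono) auto
  moreover have "emeasure M (T -` X \<inter> space M) \<le> 1" by (rule emeasure_le_1)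
  ultimately have "emeasure (distr M borel T) X = 1" using DeltaD(3)[OF M] by simp
  moreover have "prob_space (distr M borel T)" using T' by (rule prob_space_distr)
  ultimately show ?thesis by (simp add: Delta_def)
qed

lemma fosd_distr:
  assumes M: "M \<in> Delta X"
    and S: "S \<in> borel_measurable borel" and R: "R \<in> borel_measurable borel"
    and le: "\<And>x. S x \<le> R x"
  shows "fosd (distr M borel R) (distr M borel S)"
  unfolding fosd_def
proof
  fix t :: real
  interpret prob_space M using DeltaD[OF M] by simp
  have S': "S \<in> measurable M borel" and R': "R \<in> measurable M borel"
    using S R DeltaD(1)[OF M] by (simp_all add: measurable_def)
  have "measure (distr M borel R) {..t} = measure M (R -` {..t} \<inter> space M)"
    using R' by (simp add: measure_distr)
  also have "\<dots> \<le> measure M (S -` {..t} \<inter> space M)"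
    using le S' R' by (intro finite_measure_mono) (auto intro: order_trans measurable_sets)
  also have "\<dots> = measure (distr M borel S) {..t}"
    using S' by (simp add: measure_distr)
  finally show "measure (distr M borel R) {..t} \<le> measure (distr M borel S) {..t}" .
qed

lemma fosd_mix_return:
  assumes t: "0 \<le> t" "t \<le> 1" and M: "M \<in> Delta X" and xy: "x \<le> y"
  shows "fosd (mix t M (return borel y)) (mix t M (return borel x))"
  unfolding fosd_def
proof
  fix s :: real
  have pM: "prob_space M" "sets M = sets borel" using DeltaD[OF M] by auto
  have "indicator {..s} y \<le> (indicator {..s} x :: real)" using xy by (auto simp: indicator_def)
  then show "measure (mix t M (return borel y)) {..s} \<le> measure (mix t M (return borel x)) {..s}"
    using t pM
    by (simp add: mix_measure prob_space_return measure_return mult_left_mono)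
qed

lemma enn2real_comb:
  assumes "0 \<le> a" "0 \<le> b" "A < top" "B < top"
  shows "enn2real (ennreal a * A + ennreal b * B) = a * enn2real A + b * enn2real B"
  using assms by (simp add: enn2real_plus ennreal_mult_less_top enn2real_mult)

lemma mix_integral:
  fixes f :: "real \<Rightarrow> real"
  assumes t: "0 \<le> t" "t \<le> 1" and M: "sets M = sets borel" and N: "sets N = sets borel"
    and fM: "integrable M f" and fN: "integrable N f"
  shows "integrable (mix t M N) f \<and>
     integral\<^sup>L (mix t M N) f = (1 - t) * integral\<^sup>L M f + t * integral\<^sup>L N f"
proof -
  have fb: "f \<in> borel_measurable borel"
    using borel_measurable_integrable[OF fM] measurable_cong_sets[OF M refl, of borel] by metis
  have fmix: "f \<in> borel_measurable (mix t M N)"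
    using fb by (simp add: measurable_def)
  have nM: "(\<integral>\<^sup>+x. ennreal (norm (f x)) \<partial>M) < \<infinity>" and nN: "(\<integral>\<^sup>+x. ennreal (norm (f x)) \<partial>N) < \<infinity>"
    using fM fN by (simp_all add: integrable_iff_bounded)
  have "(\<integral>\<^sup>+x. ennreal (norm (f x)) \<partial>mix t M N) < \<infinity>"
    using nM nN fb by (simp add: mix_nn_integral[OF t M N] ennreal_mult_less_top)
  then have int: "integrable (mix t M N) f"
    using fmix by (simp add: integrable_iff_bounded)
  have le1: "(\<integral>\<^sup>+x. ennreal (f x) \<partial>K) \<le> (\<integral>\<^sup>+x. ennreal (norm (f x)) \<partial>K)" for K
    by (intro nn_integral_mono) (simp add: ennreal_leI)
  have le2: "(\<integral>\<^sup>+x. ennreal (- f x) \<partial>K) \<le> (\<integral>\<^sup>+x. ennreal (norm (f x)) \<partial>K)" for K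
    by (intro nn_integral_mono) (simp add: ennreal_leI)
  have fin: "(\<integral>\<^sup>+x. ennreal (f x) \<partial>M) < top" "(\<integral>\<^sup>+x. ennreal (f x) \<partial>N) < top"
     "(\<integral>\<^sup>+x. ennreal (- f x) \<partial>M) < top" "(\<integral>\<^sup>+x. ennreal (- f x) \<partial>N) < top"
    using le1[of M] le1[of N] le2[of M] le2[of N] nM nN by (auto simp: le_less_trans top.not_eq_extremum)
  have "integral\<^sup>L (mix t M N) f = (1 - t) * integral\<^sup>L M f + t * integral\<^sup>L N f"
    using t fin fb
    by (simp add: real_lebesgue_integral_def[OF int] real_lebesgue_integral_def[OF fM]
        real_lebesgue_integral_def[OF fN] mix_nn_integral[OF t M N] enn2real_comb algebra_simps)
  with int show ?thesis by simp
qed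

lemma return_integral:
  fixes g :: "real \<Rightarrow> real"
  assumes g: "g \<in> borel_measurable borel"
  shows "integrable (return borel y) g \<and> integral\<^sup>L (return borel y) g = g y"
proof
  interpret prob_space "return borel y" by (rule prob_space_return) simp
  have "AE x in return borel y. norm (g x) \<le> norm (g y)"
    using g by (subst AE_return) auto
  then show "integrable (return borel y) g"
    using g by (intro integrable_const_bound) (auto simp: measurable_def)
  show "integral\<^sup>L (return borel y) g = g y"
    using g by (intro integral_return) auto
qed

lemma foc:
  fixes v c :: "real \<Rightarrow> real" and Cf :: "real measure \<Rightarrow> real"
  assumes X: "X \<in> sets borel" and mu: "\<mu> \<in> Delta X"
    and vm: "(\<lambda>x. indicator X x * v x) \<in> borel_measurable borel"
    and cm: "continuous_on X c" and cb: "\<And>x. x \<in> X \<Longrightarrow> \<bar>c x\<bar> \<le> Bc"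
    and opt: "\<And>N. N \<in> Delta X \<Longrightarrow> ext_int X N v - ereal (Cf N) \<le> ext_int X \<mu> v - ereal (Cf \<mu>)"
    and gat: "\<And>N. N \<in> Delta X \<Longrightarrow> ((\<lambda>\<epsilon>. (Cf (mix \<epsilon> \<mu> N) - Cf \<mu>) / \<epsilon>)
                        \<longlongrightarrow> (LINT x:X|N. c x) - (LINT x:X|\<mu>. c x)) (at_right 0)"
    and fos: "\<And>M N. M \<in> Delta X \<Longrightarrow> N \<in> Delta X \<Longrightarrow> fosd N M \<Longrightarrow> Cf N \<ge> Cf M"
  shows "set_integrable \<mu> X v \<and> mono_on X c \<and>
    (\<exists>K. (\<forall>x\<in>X. v x \<le> c x + K) \<and> (AE x in \<mu>. x \<in> X \<longrightarrow> v x = c x + K))"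
proof -
  interpret mu: prob_space \<mu> using DeltaD[OF mu] by simp
  have smu: "sets \<mu> = sets borel" using DeltaD[OF mu] by simp
  have Xne: "X \<noteq> {}" using DeltaD(3)[OF mu] by auto
  then obtain x0 where x0: "x0 \<in> X" by auto
  have ret: "integrable (return borel y) (\<lambda>x. indicator X x * v x) \<and>
      integral\<^sup>L (return borel y) (\<lambda>x. indicator X x * v x) = indicator X y * v y" for y
    using return_integral[OF vm] .
  have ext_ret: "ext_int X (return borel y) v = ereal (v y)" if "y \<in> X" for y
    using ret[of y] that by (simp add: ext_int_def set_integrable_def set_lebesgue_integral_def)
  have cmeas: "(\<lambda>x. indicator X x * c x) \<in> borel_measurable borel"
    using borel_measurable_continuous_on_indicator[OF X cm] by simp
  have retc: "(LINT x:X|return borel y. c x) = c y" if "y \<in> X" for y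
    using return_integral[OF cmeas, of y] that by (simp add: set_lebesgue_integral_def)
  have cint: "set_integrable \<mu> X c"
    unfolding set_integrable_def
  proof (rule mu.integrable_const_bound[where B=Bc])
    have "0 \<le> Bc" using cb[OF x0] by linarith
    then show "AE x in \<mu>. norm (indicator X x *\<^sub>R c x) \<le> Bc"
      using cb by (intro AE_I2) (simp add: indicator_def)
    show "(\<lambda>x. indicator X x *\<^sub>R c x) \<in> borel_measurable \<mu>"
      unfolding measurable_cong_sets[OF smu refl] using cmeas by simp
  qed
  have vint: "set_integrable \<mu> X v"
  proof (rule ccontr)
    assume "\<not> ?thesis"
    then have "ext_int X \<mu> v = - \<infinity>" by (simp add: ext_int_def)
    then show False
      using opt[OF return_Delta[OF x0 X]] ext_ret[OF x0] by simp
  qed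
  define A where "A = (LINT x:X|\<mu>. v x)"
  have extmu: "ext_int X \<mu> v = ereal A" using vint by (simp add: ext_int_def A_def)
  have mixineq: "v y - A \<le> (Cf (mix e \<mu> (return borel y)) - Cf \<mu>) / e"
    if y: "y \<in> X" and e: "0 < e" "e < 1" for y e
  proof -
    have mD: "mix e \<mu> (return borel y) \<in> Delta X"
      using e by (intro mix_Delta[OF _ _ mu return_Delta[OF y X] X]) auto
    have mi: "integrable (mix e \<mu> (return borel y)) (\<lambda>x. indicator X x * v x) \<and>
        integral\<^sup>L (mix e \<mu> (return borel y)) (\<lambda>x. indicator X x * v x)
          = (1 - e) * A + e * v y"
      using mix_integral[of e \<mu> "return borel y" "\<lambda>x. indicator X x * v x"] e smu vint ret[of y] y
      by (simp add: set_integrable_def A_def set_lebesgue_integral_def)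
    then have "ext_int X (mix e \<mu> (return borel y)) v = ereal ((1 - e) * A + e * v y)"
      by (simp add: ext_int_def set_integrable_def set_lebesgue_integral_def)
    then have "(1 - e) * A + e * v y - Cf (mix e \<mu> (return borel y)) \<le> A - Cf \<mu>"
      using opt[OF mD] extmu by simp
    then have "e * (v y - A) \<le> Cf (mix e \<mu> (return borel y)) - Cf \<mu>"
      by (simp add: algebra_simps)
    then show ?thesis using e by (simp add: field_simps)
  qed
  have ev: "eventually (\<lambda>e. 0 < e \<and> e < (1::real)) (at_right 0)"
    by (simp add: eventually_at_right[of 0 1] eventually_at_right_less) (rule exI[of _ 1], auto)
  have upper: "v y \<le> c y + (A - (LINT x:X|\<mu>. c x))" if y: "y \<in> X" for y
  proof -
    have "v y - A \<le> (LINT x:X|return borel y. c x) - (LINT x:X|\<mu>. c x)"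
    proof (rule tendsto_lowerbound[OF gat[OF return_Delta[OF y X]]])
      show "\<forall>\<^sub>F e in at_right 0. v y - A \<le> (Cf (mix e \<mu> (return borel y)) - Cf \<mu>) / e"
        using ev by eventually_elim (use mixineq y in auto)
    qed simp
    then show ?thesis using retc[OF y] by simp
  qed
  have mono: "mono_on X c"
  proof (rule mono_onI)
    fix x y assume x: "x \<in> X" and y: "y \<in> X" and xy: "x \<le> y"
    have "(LINT z:X|return borel x. c z) - (LINT z:X|\<mu>. c z)
        \<le> (LINT z:X|return borel y. c z) - (LINT z:X|\<mu>. c z)"
    proof (rule tendsto_le[OF _ gat[OF return_Delta[OF y X]] gat[OF return_Delta[OF x X]]])
      show "\<forall>\<^sub>F e in at_right 0. (Cf (mix e \<mu> (return borel x)) - Cf \<mu>) / e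
            \<le> (Cf (mix e \<mu> (return borel y)) - Cf \<mu>) / e"
        using ev
      proof eventually_elim
        case (elim e)
        have mx: "mix e \<mu> (return borel x) \<in> Delta X" "mix e \<mu> (return borel y) \<in> Delta X"
          using elim x y X by (auto intro!: mix_Delta[OF _ _ mu] return_Delta)
        have "Cf (mix e \<mu> (return borel x)) \<le> Cf (mix e \<mu> (return borel y))"
          using fos[OF mx fosd_mix_return[OF _ _ mu xy]] elim by auto
        then show ?case using elim by (simp add: divide_right_mono)
      qed
    qed simp
    then show "c x \<le> c y" using retc x y by simp
  qed
  define K where "K = A - (LINT x:X|\<mu>. c x)"
  define h where "h x = indicator X x * (c x + K - v x)" for x
  have Xs: "X \<in> sets \<mu>" using X smu by simp
  have mX: "measure \<mu> X = 1" using DeltaD(3)[OF mu] mu.emeasure_eq_measure by simp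
  have ic: "integrable \<mu> (\<lambda>x. indicator X x * c x)" using cint by (simp add: set_integrable_def)
  have iv: "integrable \<mu> (\<lambda>x. indicator X x * v x)" using vint by (simp add: set_integrable_def)
  have iX: "integrable \<mu> (\<lambda>x. K * indicator X x)"
    using Xs by (intro integrable_mult_right integrable_real_indicator) (auto simp: mu.emeasure_eq_measure)
  have hI: "h = (\<lambda>x. indicator X x * c x + K * indicator X x - indicator X x * v x)"
    by (auto simp: h_def fun_eq_iff algebra_simps)
  have hint: "integrable \<mu> h"
    unfolding hI using ic iv iX by (intro Bochner_Integration.integrable_diff Bochner_Integration.integrable_add)
  have "integral\<^sup>L \<mu> h = (LINT x:X|\<mu>. c x) + K * measure \<mu> X - A"
    unfolding hI using ic iv iX Xs
    by (simp add: Bochner_Integration.integral_diff Bochner_Integration.integral_add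
        set_lebesgue_integral_def A_def)
  then have h0: "integral\<^sup>L \<mu> h = 0" by (simp add: mX K_def)
  have hnn: "AE x in \<mu>. 0 \<le> h x"
    using upper by (intro AE_I2) (auto simp: h_def K_def indicator_def)
  have "AE x in \<mu>. h x = 0"
    using integral_nonneg_eq_0_iff_AE[OF hint hnn] h0 by simp
  then have "AE x in \<mu>. x \<in> X \<longrightarrow> v x = c x + K"
    by eventually_elim (auto simp: h_def)
  moreover have "\<forall>x\<in>X. v x \<le> c x + K" using upper K_def by simp
  ultimately show ?thesis using vint mono by blast
qed

definition Fsup :: "real set \<Rightarrow> real \<Rightarrow> (real \<Rightarrow> real) \<Rightarrow> real \<Rightarrow> real" where
  "Fsup X a w z = Sup (w ` {y\<in>X. y \<le> max z a})"

definition wbar :: "real set \<Rightarrow> real \<Rightarrow> (real \<Rightarrow> real) \<Rightarrow> real \<Rightarrow> real" where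
  "wbar X a w x = Inf (Fsup X a w ` {x<..})"

locale wb_setup =
  fixes X :: "real set" and a B :: real and w :: "real \<Rightarrow> real"
  assumes aX: "a \<in> X" and amin: "\<And>y. y \<in> X \<Longrightarrow> a \<le> y" and wB: "\<And>y. y \<in> X \<Longrightarrow> w y \<le> B"
begin

abbreviation "F \<equiv> Fsup X a w"
abbreviation "W \<equiv> wbar X a w"

lemma set_ne: "w ` {y\<in>X. y \<le> max z a} \<noteq> {}"
  using aX by auto

lemma set_bdd: "bdd_above (w ` {y\<in>X. y \<le> max z a})"
  using wB by (auto intro!: bdd_aboveI)

lemma F_ge: "y \<in> X \<Longrightarrow> y \<le> max z a \<Longrightarrow> w y \<le> F z"
  unfolding Fsup_def using set_bdd by (intro cSup_upper) auto

lemma F_le: "F z \<le> B"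
  unfolding Fsup_def using set_ne wB by (intro cSup_least) auto

lemma F_lower: "w a \<le> F z"
  using F_ge[OF aX] by simp

lemma F_mono: "z \<le> z' \<Longrightarrow> F z \<le> F z'"
  unfolding Fsup_def using set_ne set_bdd
  by (intro cSup_subset_mono) auto

lemma F_approx:
  assumes "0 < d"
  shows "\<exists>y\<in>X. y \<le> max z a \<and> F z - d < w y"
proof -
  have "F z - d < Sup (w ` {y\<in>X. y \<le> max z a})" using assms by (simp add: Fsup_def)
  then obtain t where "t \<in> w ` {y\<in>X. y \<le> max z a}" "F z - d < t"
    using less_cSup_iff[OF set_ne set_bdd] by blast
  then show ?thesis by auto
qed

lemma Fimg_bdd: "bdd_below (F ` S)"
  using F_lower by (auto intro!: bdd_belowI)

lemma W_le_F: "x < z \<Longrightarrow> W x \<le> F z"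
  unfolding wbar_def using Fimg_bdd by (intro cInf_lower) auto

lemma W_ge: "w a \<le> W x"
  unfolding wbar_def using F_lower by (intro cInf_greatest) (auto intro: gt_ex)

lemma W_le_B: "W x \<le> B"
  using W_le_F[of x "x + 1"] F_le[of "x + 1"] by simp

lemma W_mono: "mono W"
proof (rule monoI)
  fix x x' :: real assume "x \<le> x'"
  then show "W x \<le> W x'"
    unfolding wbar_def[of X a w x']
    by (intro cInf_greatest) (auto intro: gt_ex W_le_F)
qed

lemma W_ge_w: "x \<in> X \<Longrightarrow> w x \<le> W x"
  unfolding wbar_def by (intro cInf_greatest) (auto intro: gt_ex F_ge)

lemma W_rcont: "continuous (at x within {x..}) W"
  unfolding continuous_within
proof (rule order_tendstoI)
  fix l assume "l < W x"
  then show "\<forall>\<^sub>F y in at x within {x..}. l < W y"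
    unfolding eventually_at_filter
  proof (intro always_eventually allI impI)
    fix y assume "y \<in> {x..}"
    then show "l < W y" using W_mono \<open>l < W x\<close> by (auto simp: mono_def intro: less_le_trans)
  qed
next
  fix h assume "W x < h"
  then have "Inf (F ` {x<..}) < h" by (simp add: wbar_def)
  then obtain z where z: "x < z" "F z < h"
    using cInf_lessD[of "F ` {x<..}" h] by (auto intro: gt_ex)
  show "\<forall>\<^sub>F y in at x within {x..}. W y < h"
    unfolding eventually_at
  proof (intro exI[of _ "z - x"] conjI ballI impI)
    show "0 < z - x" using z by simp
    fix y assume "y \<in> {x..}" "y \<noteq> x \<and> dist y x < z - x"
    then have "y < z" by (auto simp: dist_real_def)
    then show "W y < h" using W_le_F[of y z] z by simp
  qed
qed

lemma W_le_w:
  fixes u g :: "real \<Rightarrow> real"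
  assumes u_mono: "strict_mono u" and u_cont: "continuous_on UNIV u"
    and g_cont: "continuous_on X g" and g_mono: "mono_on X g"
    and ug: "\<And>y. y \<in> X \<Longrightarrow> u (w y) \<le> g y"
    and x: "x \<in> X" and eq: "u (w x) = g x"
  shows "W x \<le> w x"
proof (rule ccontr)
  assume "\<not> W x \<le> w x"
  then have "u (w x) < u (W x)" using u_mono by (simp add: strict_mono_less)
  define \<eta> where "\<eta> = u (W x) - g x"
  have eta: "0 < \<eta>" using \<open>u (w x) < u (W x)\<close> eq by (simp add: \<eta>_def)
  obtain d where d: "0 < d" and dd: "\<And>y. y \<in> X \<Longrightarrow> dist y x < d \<Longrightarrow> dist (g y) (g x) < \<eta> / 2"
    using g_cont x eta unfolding continuous_on_iff by (metis half_gt_zero)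
  define z where "z = x + d / 2"
  have xz: "x < z" using d by (simp add: z_def)
  have maxz: "max z a = z" using amin[OF x] xz by simp
  have gy: "u (w y) \<le> g x + \<eta> / 2" if y: "y \<in> X" "y \<le> max z a" for y
  proof (cases "y \<le> x")
    case True
    have "g y \<le> g x" using mono_onD[OF g_mono y(1) x True] .
    then show ?thesis using ug[OF y(1)] eta by linarith
  next
    case False
    then have "dist y x < d" using y maxz d by (simp add: z_def dist_real_def)
    then have "\<bar>g y - g x\<bar> < \<eta> / 2" using dd[OF y(1)] by (simp add: dist_real_def)
    then show ?thesis using ug[OF y(1)] by linarith
  qed
  have umono: "mono u" using u_mono strict_mono_mono by blast
  have ucont: "continuous (at_left (F z)) u"
  proof -
    have "isCont u (F z)" using continuous_on_eq_continuous_at[OF open_UNIV] u_cont by blast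
    then show ?thesis by (rule continuous_at_imp_continuous_within)
  qed
  have "u (F z) = (SUP s\<in>w ` {y\<in>X. y \<le> max z a}. u s)"
    unfolding Fsup_def by (rule continuous_at_Sup_mono[OF umono _ set_ne set_bdd])
      (use ucont in \<open>simp add: Fsup_def\<close>)
  also have "\<dots> \<le> g x + \<eta> / 2"
    using set_ne gy by (intro cSUP_least) auto
  finally have "u (F z) \<le> g x + \<eta> / 2" .
  moreover have "u (W x) \<le> u (F z)" using W_le_F[OF xz] umono by (simp add: monoD)
  ultimately have "u (W x) \<le> g x + \<eta> / 2" by (rule order_trans[rotated])
  then have "\<eta> \<le> \<eta> / 2" unfolding \<eta>_def by (simp add: field_simps)
  then show False using eta by simp
qed

end

lemma meas_borel:
  assumes "sets N = sets borel" "f \<in> borel_measurable borel"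
  shows "f \<in> borel_measurable N"
  unfolding measurable_cong_sets[OF assms(1) refl] by (rule assms(2))

lemma dc_const:
  fixes f :: "real \<Rightarrow> real" and s :: "nat \<Rightarrow> real \<Rightarrow> real"
  assumes N: "prob_space N" "sets N = sets borel"
    and fm: "f \<in> borel_measurable borel" and sm: "\<And>i. s i \<in> borel_measurable borel"
    and bd: "\<And>i x. \<bar>s i x\<bar> \<le> K" and lim: "\<And>x. (\<lambda>i. s i x) \<longlonglongrightarrow> f x"
  shows "(\<lambda>i. integral\<^sup>L N (s i)) \<longlonglongrightarrow> integral\<^sup>L N f"
proof (rule integral_dominated_convergence[where w="\<lambda>_. K"])
  interpret prob_space N by fact
  show "f \<in> borel_measurable N" using meas_borel[OF N(2) fm] .
  show "s i \<in> borel_measurable N" for i using meas_borel[OF N(2) sm] .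
  show "integrable N (\<lambda>_. K)" by simp
  show "AE x in N. (\<lambda>i. s i x) \<longlonglongrightarrow> f x" using lim by simp
  show "AE x in N. norm (s i x) \<le> K" for i using bd by simp
qed

lemma safety:
  fixes Cf :: "real measure \<Rightarrow> real" and u w f :: "real \<Rightarrow> real"
    and S R :: "nat \<Rightarrow> real \<Rightarrow> real" and U :: ereal
  assumes X: "X \<in> sets borel" "compact X" and N: "N \<in> Delta X"
    and Ccont: "\<And>Ms M. (\<forall>n. Ms n \<in> Delta X) \<Longrightarrow> M \<in> Delta X
                    \<Longrightarrow> weak_conv_on X Ms M \<Longrightarrow> (\<lambda>n. Cf (Ms n)) \<longlonglongrightarrow> Cf M"
    and fos: "\<And>M N. M \<in> Delta X \<Longrightarrow> N \<in> Delta X \<Longrightarrow> fosd N M \<Longrightarrow> Cf N \<ge> Cf M"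
    and safe_w: "\<And>M. M \<in> Delta X \<Longrightarrow> ext_int X M (\<lambda>x. u (w x)) - ereal (Cf M) \<le> U"
    and wm: "(\<lambda>x. indicator X x * w x) \<in> borel_measurable borel"
    and wB: "\<And>x. x \<in> X \<Longrightarrow> w x \<le> B"
    and ucont: "continuous_on UNIV u" and umono: "mono u"
    and fmono: "mono f" and fL: "\<And>x. L \<le> f x" and fB: "\<And>x. f x \<le> B'"
    and Sm: "\<And>n. S n \<in> borel_measurable borel" and Rm: "\<And>n. R n \<in> borel_measurable borel"
    and Sout: "\<And>n x. x \<notin> X \<Longrightarrow> S n x = x" and Rout: "\<And>n x. x \<notin> X \<Longrightarrow> R n x = x"
    and SX: "\<And>n x. x \<in> X \<Longrightarrow> S n x \<in> X" and RX: "\<And>n x. x \<in> X \<Longrightarrow> R n x \<in> X"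
    and SR: "\<And>n x. S n x \<le> R n x"
    and Rlim: "\<And>x. x \<in> X \<Longrightarrow> (\<lambda>n. R n x) \<longlonglongrightarrow> x"
    and Sw: "\<And>n x. x \<in> X \<Longrightarrow> f x - 1 / (Suc n) \<le> w (S n x)"
  shows "ext_int X N (\<lambda>x. u (f x)) - ereal (Cf N) \<le> U"
proof -
  interpret Np: prob_space N using DeltaD[OF N] by simp
  have sN: "sets N = sets borel" using DeltaD[OF N] by simp
  obtain x0 where x0: "x0 \<in> X" using DeltaD(3)[OF N] by (metis emeasure_empty equals0I zero_neq_one)
  have [measurable]: "X \<in> sets borel" using X by simp
  have fm[measurable]: "f \<in> borel_measurable borel" using fmono by (rule borel_measurable_mono)
  have um[measurable]: "u \<in> borel_measurable borel" using ucont by (rule borel_measurable_continuous_onI)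
  have [measurable]: "S n \<in> borel_measurable borel" "R n \<in> borel_measurable borel" for n
    using Sm Rm by auto
  have wm'[measurable]: "(\<lambda>x. indicator X x * w x) \<in> borel_measurable borel" by (rule wm)
  have indS: "indicator X (S n x) = (indicator X x :: real)" for n x
    using SX Sout by (cases "x \<in> X") (auto simp: indicator_def)
  have indR: "indicator X (R n x) = (indicator X x :: real)" for n x
    using RX Rout by (cases "x \<in> X") (auto simp: indicator_def)
  define hv where "hv x = indicator X x * u (indicator X x * w x)" for x
  have hv_eq: "hv x = indicator X x * u (w x)" for x by (simp add: hv_def indicator_def)
  have hv_fun: "hv = (\<lambda>x. indicator X x * u (w x))" by (simp add: fun_eq_iff hv_eq)
  have hvm[measurable]: "hv \<in> borel_measurable borel" unfolding hv_def by measurable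
  define K where "K = \<bar>u (L - 1)\<bar> + \<bar>u B\<bar> + \<bar>u B'\<bar>"
  define g where "g n x = indicator X x * u (f x - 1 / Suc n)" for n x
  define g0 where "g0 x = indicator X x * u (f x)" for x
  have gm[measurable]: "g n \<in> borel_measurable borel" for n unfolding g_def by measurable
  have g0m[measurable]: "g0 \<in> borel_measurable borel" unfolding g0_def by measurable
  have ulow: "u (L - 1) \<le> u (f x - 1 / Suc n)" for x n
  proof -
    have "1 / real (Suc n) \<le> 1" by simp
    then have "L - 1 \<le> f x - 1 / Suc n" using fL[of x] by linarith
    then show ?thesis using umono by (simp add: monoD)
  qed
  have uup: "u (f x - 1 / Suc n) \<le> u B'" for x n
  proof -
    have "f x - 1 / Suc n \<le> B'" using fB[of x] by (smt (verit) of_nat_0_le_iff divide_nonneg_nonneg)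
    then show ?thesis using umono by (simp add: monoD)
  qed
  have g_bd: "\<bar>g n x\<bar> \<le> K" for n x
    using ulow[of x n] uup[of x n] by (auto simp: g_def K_def indicator_def)
  have g0_bd: "\<bar>g0 x\<bar> \<le> K" for x
  proof -
    have "u (L - 1) \<le> u (f x)" "u (f x) \<le> u B'"
      using fL[of x] fB[of x] umono by (auto simp: monoD)
    then show ?thesis by (auto simp: g0_def K_def indicator_def)
  qed
  have step: "ereal (integral\<^sup>L N (g n) - Cf (distr N borel (R n))) \<le> U" for n
  proof -
    define Mn where "Mn = distr N borel (S n)"
    define Pn where "Pn = distr N borel (R n)"
    have MD: "Mn \<in> Delta X" unfolding Mn_def using distr_Delta[OF N X(1) Sm SX] .
    have PD: "Pn \<in> Delta X" unfolding Pn_def using distr_Delta[OF N X(1) Rm RX] .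
    have Sn: "S n \<in> measurable N borel" using meas_borel[OF sN Sm] .
    have hvS: "hv (S n x) = indicator X x * u (w (S n x))" for x
      by (simp add: hv_eq indS)
    have hvS_bd: "\<bar>hv (S n x)\<bar> \<le> K" for x
    proof (cases "x \<in> X")
      case True
      have "u (f x - 1 / Suc n) \<le> u (w (S n x))" using Sw[OF True] umono by (simp add: monoD)
      moreover have "u (w (S n x)) \<le> u B" using wB[OF SX[OF True]] umono by (simp add: monoD)
      ultimately show ?thesis using ulow[of x n] True by (auto simp: hvS K_def)
    qed (simp add: hvS K_def)
    have hvSm: "(\<lambda>x. hv (S n x)) \<in> borel_measurable borel" by measurable
    have intS: "integrable N (\<lambda>x. hv (S n x))"
      by (rule Np.integrable_const_bound[where B=K]) (use hvS_bd meas_borel[OF sN hvSm] in auto)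
    have intM: "integrable Mn hv" unfolding Mn_def
      using intS by (subst integrable_distr_eq[OF Sn]) auto
    have extM: "ext_int X Mn (\<lambda>x. u (w x)) = ereal (integral\<^sup>L N (\<lambda>x. hv (S n x)))"
    proof -
      have "set_integrable Mn X (\<lambda>x. u (w x))"
        using intM by (simp add: set_integrable_def hv_fun)
      moreover have "(LINT x:X|Mn. u (w x)) = integral\<^sup>L N (\<lambda>x. hv (S n x))"
        unfolding set_lebesgue_integral_def Mn_def
        using integral_distr[OF Sn hvm] by (simp add: hv_fun)
      ultimately show ?thesis by (simp add: ext_int_def)
    qed
    have intg: "integrable N (g n)"
      by (rule Np.integrable_const_bound[where B=K]) (use g_bd meas_borel[OF sN gm] in auto)
    have le1: "integral\<^sup>L N (g n) \<le> integral\<^sup>L N (\<lambda>x. hv (S n x))"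
    proof (rule integral_mono[OF intg intS])
      fix x show "g n x \<le> hv (S n x)"
      proof (cases "x \<in> X")
        case True
        then show ?thesis using Sw[OF True] umono by (simp add: g_def hvS monoD)
      qed (simp add: g_def hvS)
    qed
    have le2: "Cf Mn \<le> Cf Pn"
      using fos[OF MD PD] fosd_distr[OF N Sm Rm SR] unfolding Mn_def Pn_def by blast
    have "ereal (integral\<^sup>L N (\<lambda>x. hv (S n x))) - ereal (Cf Mn) \<le> U"
      using safe_w[OF MD] extM by simp
    then have "ereal (integral\<^sup>L N (\<lambda>x. hv (S n x)) - Cf Mn) \<le> U" by simp
    moreover have "integral\<^sup>L N (g n) - Cf Pn \<le> integral\<^sup>L N (\<lambda>x. hv (S n x)) - Cf Mn"
      using le1 le2 by linarith
    ultimately show ?thesis unfolding Pn_def by (meson ereal_less_eq(3) order_trans)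
  qed
  have lim1: "(\<lambda>n. integral\<^sup>L N (g n)) \<longlonglongrightarrow> integral\<^sup>L N g0"
  proof (rule dc_const[OF Np.prob_space_axioms sN g0m gm g_bd])
    fix x
    have "(\<lambda>n. f x - 1 / real (Suc n)) \<longlonglongrightarrow> f x - 0"
      by (intro tendsto_diff tendsto_const LIMSEQ_Suc[OF lim_1_over_n])
    then have l: "(\<lambda>n. f x - 1 / real (Suc n)) \<longlonglongrightarrow> f x" by simp
    have "isCont u (f x)" using continuous_on_eq_continuous_at[OF open_UNIV] ucont by blast
    from isCont_tendsto_compose[OF this l]
    have "(\<lambda>n. u (f x - 1 / real (Suc n))) \<longlonglongrightarrow> u (f x)" .
    then show "(\<lambda>n. g n x) \<longlonglongrightarrow> g0 x"
      unfolding g_def g0_def by (intro tendsto_mult tendsto_const)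
  qed
  have lim2: "(\<lambda>n. Cf (distr N borel (R n))) \<longlonglongrightarrow> Cf N"
  proof (rule Ccont)
    show "\<forall>n. distr N borel (R n) \<in> Delta X" using distr_Delta[OF N X(1) Rm RX] by blast
    show "N \<in> Delta X" by (rule N)
    show "weak_conv_on X (\<lambda>n. distr N borel (R n)) N"
      unfolding weak_conv_on_def
    proof (intro allI impI)
      fix \<phi> :: "real \<Rightarrow> real" assume phi: "continuous_on X \<phi>"
      have "compact (\<phi> ` X)" using compact_continuous_image[OF phi X(2)] .
      then obtain Kp where Kp: "\<And>y. y \<in> X \<Longrightarrow> \<bar>\<phi> y\<bar> \<le> Kp"
        by (metis compact_imp_bounded bounded_real image_eqI)
      have pm[measurable]: "(\<lambda>x. indicator X x * \<phi> x) \<in> borel_measurable borel"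
        using borel_measurable_continuous_on_indicator[OF X(1) phi] by simp
      have Rn: "R n \<in> measurable N borel" for n using meas_borel[OF sN Rm] .
      have eq: "(LINT x:X|distr N borel (R n). \<phi> x) = integral\<^sup>L N (\<lambda>x. indicator X x * \<phi> (R n x))" for n
        unfolding set_lebesgue_integral_def
        using integral_distr[OF Rn pm] by (simp add: indR)
      have eq0: "(LINT x:X|N. \<phi> x) = integral\<^sup>L N (\<lambda>x. indicator X x * \<phi> x)"
        unfolding set_lebesgue_integral_def by simp
      have "(\<lambda>n. integral\<^sup>L N (\<lambda>x. indicator X x * \<phi> (R n x))) \<longlonglongrightarrow> integral\<^sup>L N (\<lambda>x. indicator X x * \<phi> x)"
      proof (rule dc_const[OF Np.prob_space_axioms sN pm])
        show "(\<lambda>x. indicator X x * \<phi> (R n x)) \<in> borel_measurable borel" for n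
        proof -
          have "(\<lambda>x. indicator X (R n x) * \<phi> (R n x)) \<in> borel_measurable borel" by measurable
          then show ?thesis by (simp add: indR)
        qed
        show "\<bar>indicator X x * \<phi> (R n x)\<bar> \<le> Kp" for n x
          using Kp[OF RX] Kp[OF x0] by (cases "x \<in> X") (auto simp: indicator_def)
        fix x show "(\<lambda>n. indicator X x * \<phi> (R n x)) \<longlonglongrightarrow> indicator X x * \<phi> x"
        proof (cases "x \<in> X")
          case True
          have "(\<lambda>n. \<phi> (R n x)) \<longlonglongrightarrow> \<phi> x"
            by (rule continuous_on_tendsto_compose[OF phi Rlim[OF True] True]) (use RX True in simp)
          then show ?thesis by (intro tendsto_mult tendsto_const)
        qed simp
      qed
      then show "(\<lambda>n. LINT x:X|distr N borel (R n). \<phi> x) \<longlonglongrightarrow> (LINT x:X|N. \<phi> x)"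
        unfolding eq eq0 .
    qed
  qed
  have "(\<lambda>n. ereal (integral\<^sup>L N (g n) - Cf (distr N borel (R n)))) \<longlonglongrightarrow> ereal (integral\<^sup>L N g0 - Cf N)"
    using lim1 lim2 by (intro tendsto_ereal tendsto_diff)
  then have fin: "ereal (integral\<^sup>L N g0 - Cf N) \<le> U"
    by (rule LIMSEQ_le_const2) (use step in auto)
  have int0: "integrable N g0"
    by (rule Np.integrable_const_bound[where B=K]) (use g0_bd meas_borel[OF sN g0m] in auto)
  have "ext_int X N (\<lambda>x. u (f x)) = ereal (integral\<^sup>L N g0)"
  proof -
    have g0f: "g0 = (\<lambda>x. indicator X x * u (f x))" by (simp add: fun_eq_iff g0_def)
    show ?thesis using int0 unfolding g0f by (simp add: ext_int_def set_integrable_def set_lebesgue_integral_def)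
  qed
  then show ?thesis using fin by simp
qed

definition constr_ok :: "real set \<Rightarrow> real \<Rightarrow> (real \<Rightarrow> real) \<Rightarrow> (nat \<Rightarrow> real \<Rightarrow> real) \<Rightarrow> (nat \<Rightarrow> real \<Rightarrow> real) \<Rightarrow> bool" where
  "constr_ok X a w S R \<longleftrightarrow> (\<forall>n. S n \<in> borel_measurable borel) \<and> (\<forall>n. R n \<in> borel_measurable borel)
     \<and> (\<forall>n x. x \<notin> X \<longrightarrow> S n x = x) \<and> (\<forall>n x. x \<notin> X \<longrightarrow> R n x = x)
     \<and> (\<forall>n. \<forall>x\<in>X. S n x \<in> X) \<and> (\<forall>n. \<forall>x\<in>X. R n x \<in> X) \<and> (\<forall>n x. S n x \<le> R n x)
     \<and> (\<forall>x\<in>X. (\<lambda>n. R n x) \<longlonglongrightarrow> x)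
     \<and> (\<forall>n. \<forall>x\<in>X. wbar X a w x - 1 / Suc n \<le> w (S n x))"

lemma constr_interval:
  fixes w :: "real \<Rightarrow> real"
  assumes X: "X = {a..b}" "a \<le> b" and wB: "\<And>y. y \<in> X \<Longrightarrow> w y \<le> B"
  shows "\<exists>S R. constr_ok X a w S R"
proof -
  interpret wb_setup X a B w
    by standard (use X wB in auto)
  define q where "q n k = (real_of_int k + 1) / Suc n" for n :: nat and k :: int
  define sel where "sel n k = (SOME y. y \<in> X \<and> y \<le> max (q n k) a \<and> F (q n k) - 1 / Suc n < w y)" for n k
  have sel: "sel n k \<in> X \<and> sel n k \<le> max (q n k) a \<and> F (q n k) - 1 / Suc n < w (sel n k)" for n k
    unfolding sel_def by (rule someI_ex) (use F_approx[of "1 / Suc n" "q n k"] in auto)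
  define S where "S n x = (if x \<in> X then sel n \<lfloor>x * Suc n\<rfloor> else x)" for n x
  define R where "R n x = (if x \<in> X then min (q n \<lfloor>x * Suc n\<rfloor>) b else x)" for n x
  have qgt: "x < q n \<lfloor>x * Suc n\<rfloor>" for n :: nat and x :: real
  proof -
    have "x * Suc n < real_of_int \<lfloor>x * Suc n\<rfloor> + 1" by linarith
    then show ?thesis unfolding q_def by (simp add: field_simps)
  qed
  have qle: "q n \<lfloor>x * Suc n\<rfloor> \<le> x + 1 / Suc n" for n :: nat and x :: real
  proof -
    have "real_of_int \<lfloor>x * Suc n\<rfloor> + 1 \<le> x * Suc n + 1" by linarith
    then have "(real_of_int \<lfloor>x * Suc n\<rfloor> + 1) / Suc n \<le> (x * Suc n + 1) / Suc n"
      by (rule divide_right_mono) simp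
    also have "(x * Suc n + 1) / Suc n = x + 1 / Suc n"
      by (simp add: add_divide_distrib del: of_nat_Suc)
    finally show ?thesis unfolding q_def .
  qed
  have Xb[measurable]: "X \<in> sets borel" using X by simp
  have Sm: "S n \<in> borel_measurable borel" for n
  proof -
    have "(\<lambda>x::real. if x \<in> X then sel n \<lfloor>x * real (Suc n)\<rfloor> else x) \<in> borel_measurable borel"
    proof (rule measurable_compose_countable'[where I=UNIV and f="\<lambda>k x. if x \<in> X then sel n k else x"
          and g="\<lambda>x::real. \<lfloor>x * real (Suc n)\<rfloor>"])
      show "(\<lambda>x. if x \<in> X then sel n i else x) \<in> borel_measurable borel" for i by measurable
      show "(\<lambda>x::real. \<lfloor>x * real (Suc n)\<rfloor>) \<in> borel \<rightarrow>\<^sub>M count_space UNIV" by measurable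
    qed simp
    then show ?thesis by (simp add: S_def[abs_def])
  qed
  have Rm: "R n \<in> borel_measurable borel" for n
    unfolding R_def[abs_def] q_def by measurable
  have ok: "constr_ok X a w S R"
    unfolding constr_ok_def
  proof (intro conjI allI ballI impI)
    fix n show "S n \<in> borel_measurable borel" by (rule Sm)
  next
    fix n show "R n \<in> borel_measurable borel" by (rule Rm)
  next
    fix n x assume "x \<notin> X" then show "S n x = x" by (simp add: S_def)
  next
    fix n x assume "x \<notin> X" then show "R n x = x" by (simp add: R_def)
  next
    fix n x assume "x \<in> X" then show "S n x \<in> X" using sel by (simp add: S_def)
  next
    fix n x assume x: "x \<in> X"
    have "x < q n \<lfloor>x * Suc n\<rfloor>" by (rule qgt)
    then show "R n x \<in> X" using x X by (auto simp: R_def)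
  next
    fix n x show "S n x \<le> R n x"
    proof (cases "x \<in> X")
      case True
      have "x < q n \<lfloor>x * Suc n\<rfloor>" by (rule qgt)
      then have "max (q n \<lfloor>x * Suc n\<rfloor>) a = q n \<lfloor>x * Suc n\<rfloor>" using True X by auto
      then show ?thesis using True sel[of n "\<lfloor>x * Suc n\<rfloor>"] X by (auto simp: S_def R_def)
    qed (simp add: S_def R_def)
  next
    fix x assume x: "x \<in> X"
    show "(\<lambda>n. R n x) \<longlonglongrightarrow> x"
    proof (rule tendsto_sandwich[where f="\<lambda>n. x" and h="\<lambda>n. x + 1 / Suc n"])
      show "\<forall>\<^sub>F n in sequentially. x \<le> R n x" using qgt x X by (auto simp: R_def less_imp_le)
      show "\<forall>\<^sub>F n in sequentially. R n x \<le> x + 1 / real (Suc n)"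
        using qle x by (intro always_eventually allI) (simp add: R_def min.coboundedI1 del: of_nat_Suc)
      have "(\<lambda>n. x + 1 / real (Suc n)) \<longlonglongrightarrow> x + 0"
        by (intro tendsto_add tendsto_const LIMSEQ_Suc[OF lim_1_over_n])
      then show "(\<lambda>n. x + 1 / real (Suc n)) \<longlonglongrightarrow> x" by simp
    qed simp
  next
    fix n x assume x: "x \<in> X"
    have "W x \<le> F (q n \<lfloor>x * Suc n\<rfloor>)" by (rule W_le_F[OF qgt])
    then show "wbar X a w x - 1 / Suc n \<le> w (S n x)"
      using sel[of n "\<lfloor>x * Suc n\<rfloor>"] x by (simp add: S_def)
  qed
  then show ?thesis by blast
qed

lemma constr_finite:
  fixes w :: "real \<Rightarrow> real"
  assumes X: "finite X" and aX: "a \<in> X" and amin: "\<And>y. y \<in> X \<Longrightarrow> a \<le> y"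
    and wB: "\<And>y. y \<in> X \<Longrightarrow> w y \<le> B"
  shows "\<exists>S R. constr_ok X a w S R"
proof -
  interpret wb_setup X a B w
    by standard (use aX amin wB in auto)
  define G where "G = {y - x | x y. x \<in> X \<and> y \<in> X \<and> x < y}"
  have Gfin: "finite G"
  proof -
    have "G \<subseteq> (\<lambda>(x, y). y - x) ` (X \<times> X)" by (auto simp: G_def)
    then show ?thesis using X finite_subset by blast
  qed
  define d where "d = Min (insert 1 G) / 2"
  have dpos: "0 < d"
    unfolding d_def using Gfin by (auto simp: G_def)
  have gap: "x + d < y" if "x \<in> X" "y \<in> X" "x < y" for x y
  proof -
    have "y - x \<in> G" using that by (auto simp: G_def)
    then have "Min (insert 1 G) \<le> y - x" using Gfin by simp
    moreover have "0 < Min (insert 1 G)" using Gfin by (auto simp: G_def)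
    ultimately show ?thesis unfolding d_def by linarith
  qed
  define sel where "sel n x = (SOME y. y \<in> X \<and> y \<le> max (x + d) a \<and> F (x + d) - 1 / Suc n < w y)" for n x
  have sel: "sel n x \<in> X \<and> sel n x \<le> max (x + d) a \<and> F (x + d) - 1 / Suc n < w (sel n x)" for n x
    unfolding sel_def by (rule someI_ex) (use F_approx[of "1 / Suc n" "x + d"] in auto)
  have selx: "sel n x \<le> x" if x: "x \<in> X" for n x
  proof (rule ccontr)
    assume "\<not> sel n x \<le> x"
    then have "x + d < sel n x" using gap[OF x] sel[of n x] by auto
    moreover have "max (x + d) a = x + d" using amin[OF x] dpos by auto
    ultimately show False using sel[of n x] by auto
  qed
  define S where "S n x = (if x \<in> X then sel n x else x)" for n x
  define R where "R n x = x" for n :: nat and x :: real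
  have Sm: "S n \<in> borel_measurable borel" for n
  proof (rule measurable_discrete_difference[where f="\<lambda>x. x" and X=X])
    show "countable X" using X by (rule countable_finite)
  qed (auto simp: S_def)
  have ok: "constr_ok X a w S R"
    unfolding constr_ok_def
  proof (intro conjI allI ballI impI)
    fix n x assume x: "x \<in> X"
    have "W x \<le> F (x + d)" using W_le_F dpos by simp
    then show "wbar X a w x - 1 / Suc n \<le> w (S n x)"
      using sel[of n x] x by (simp add: S_def)
  qed (use Sm sel selx in \<open>auto simp: S_def R_def[abs_def]\<close>)
  then show ?thesis by blast
qed

lemma ind_meas:
  fixes w :: "real \<Rightarrow> real"
  assumes X: "X \<in> sets borel" and wm: "w \<in> borel_measurable (restrict_space borel X)"
  shows "(\<lambda>x. indicator X x * w x) \<in> borel_measurable borel"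
  using wm borel_measurable_restrict_space_iff[of X borel w] X by simp

lemma ind_meas_u:
  fixes w u :: "real \<Rightarrow> real"
  assumes X: "X \<in> sets borel" and wm: "(\<lambda>x. indicator X x * w x) \<in> borel_measurable borel"
    and u: "continuous_on UNIV u"
  shows "(\<lambda>x. indicator X x * u (w x)) \<in> borel_measurable borel"
proof -
  have [measurable]: "u \<in> borel_measurable borel" using u by (rule borel_measurable_continuous_onI)
  have [measurable]: "X \<in> sets borel" using X .
  have "(\<lambda>x. indicator X x * u (indicator X x * w x)) \<in> borel_measurable borel"
    using wm by measurable
  moreover have "(\<lambda>x. indicator X x * u (indicator X x * w x)) = (\<lambda>x. indicator X x * u (w x))"
    by (auto simp: fun_eq_iff indicator_def)
  ultimately show ?thesis by simp
qed

lemma ae_lemma: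
  fixes u :: "real \<Rightarrow> real" and C :: "real \<Rightarrow> real measure \<Rightarrow> real" and w :: "real \<Rightarrow> real"
  assumes X: "X \<in> sets borel" "compact X" and aX: "a \<in> X" and amin: "\<And>y. y \<in> X \<Longrightarrow> a \<le> y"
    and mu: "mu \<in> Delta X"
    and wm: "(\<lambda>x. indicator X x * w x) \<in> borel_measurable borel" and wB: "\<And>x. x \<in> X \<Longrightarrow> w x \<le> B"
    and u_mono: "strict_mono u" and u_cont: "continuous_on UNIV u"
    and opt: "\<And>N. N \<in> Delta X \<Longrightarrow> Util X u C \<theta> w N \<le> Util X u C \<theta> w mu"
    and gat: "\<exists>c. continuous_on X c \<and>
                    (\<forall>N\<in>Delta X. ((\<lambda>\<epsilon>. (C \<theta> (mix \<epsilon> mu N) - C \<theta> mu) / \<epsilon>)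
                        \<longlongrightarrow> (LINT x:X|N. c x) - (LINT x:X|mu. c x)) (at_right 0))"
    and fos: "\<And>M N. M \<in> Delta X \<Longrightarrow> N \<in> Delta X \<Longrightarrow> fosd N M \<Longrightarrow> C \<theta> N \<ge> C \<theta> M"
  shows "AE x in mu. x \<in> X \<longrightarrow> wbar X a w x = w x"
proof -
  interpret wb_setup X a B w by standard (use aX amin wB in auto)
  obtain c where c: "continuous_on X c" and cg: "\<And>N. N \<in> Delta X \<Longrightarrow> ((\<lambda>\<epsilon>. (C \<theta> (mix \<epsilon> mu N) - C \<theta> mu) / \<epsilon>)
                        \<longlongrightarrow> (LINT x:X|N. c x) - (LINT x:X|mu. c x)) (at_right 0)"
    using gat by blast
  have "compact (c ` X)" using compact_continuous_image[OF c X(2)] .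
  then obtain Bc where Bc: "\<And>x. x \<in> X \<Longrightarrow> \<bar>c x\<bar> \<le> Bc"
    by (metis compact_imp_bounded bounded_real image_eqI)
  have vm: "(\<lambda>x. indicator X x * u (w x)) \<in> borel_measurable borel"
    by (rule ind_meas_u[OF X(1) wm u_cont])
  have "set_integrable mu X (\<lambda>x. u (w x)) \<and> mono_on X c \<and>
    (\<exists>K. (\<forall>x\<in>X. u (w x) \<le> c x + K) \<and> (AE x in mu. x \<in> X \<longrightarrow> u (w x) = c x + K))"
    by (rule foc[OF X(1) mu vm c Bc _ cg fos]) (use opt in \<open>auto simp: Util_def\<close>)
  then obtain K where cm: "mono_on X c" and le: "\<forall>x\<in>X. u (w x) \<le> c x + K"
    and ae: "AE x in mu. x \<in> X \<longrightarrow> u (w x) = c x + K" by blast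
  have gc: "continuous_on X (\<lambda>x. c x + K)" using c by (intro continuous_intros)
  have gm: "mono_on X (\<lambda>x. c x + K)" using cm by (auto simp: mono_on_def)
  show ?thesis
    using ae
  proof eventually_elim
    case (elim x)
    show ?case
    proof
      assume x: "x \<in> X"
      have "W x \<le> w x"
        by (rule W_le_w[OF u_mono u_cont gc gm _ x]) (use le elim x in auto)
      then show "W x = w x" using W_ge_w[OF x] by simp
    qed
  qed
qed

lemma ext_eq:
  fixes u f g :: "real \<Rightarrow> real"
  assumes X: "X \<in> sets borel" and mu: "mu \<in> Delta X"
    and fm: "(\<lambda>x. indicator X x * u (f x)) \<in> borel_measurable borel"
    and gm: "(\<lambda>x. indicator X x * u (g x)) \<in> borel_measurable borel"
    and ae: "AE x in mu. x \<in> X \<longrightarrow> f x = g x"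
  shows "ext_int X mu (\<lambda>x. u (f x)) = ext_int X mu (\<lambda>x. u (g x))"
proof -
  have s: "sets mu = sets borel" using DeltaD[OF mu] by simp
  have ae': "AE x in mu. indicator X x * u (f x) = indicator X x * u (g x)"
    using ae by eventually_elim (auto simp: indicator_def)
  have "integrable mu (\<lambda>x. indicator X x * u (f x)) = integrable mu (\<lambda>x. indicator X x * u (g x))"
    by (rule integrable_cong_AE[OF meas_borel[OF s fm] meas_borel[OF s gm] ae'])
  moreover have "integral\<^sup>L mu (\<lambda>x. indicator X x * u (f x)) = integral\<^sup>L mu (\<lambda>x. indicator X x * u (g x))"
    by (rule integral_cong_AE[OF meas_borel[OF s fm] meas_borel[OF s gm] ae'])
  ultimately show ?thesis
    by (simp add: ext_int_def set_integrable_def set_lebesgue_integral_def)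
qed

lemma null_lemma:
  fixes f g :: "real \<Rightarrow> real"
  assumes X: "X \<in> sets borel" and mu: "mu \<in> Delta X"
    and fm: "f \<in> borel_measurable borel"
    and gm: "(\<lambda>x. indicator X x * g x) \<in> borel_measurable borel"
    and ae: "AE x in mu. x \<in> X \<longrightarrow> f x = g x"
  shows "emeasure mu {x\<in>X. f x \<noteq> g x} = 0"
proof -
  have [measurable]: "X \<in> sets borel" "f \<in> borel_measurable borel"
    "(\<lambda>x. indicator X x * g x) \<in> borel_measurable borel" using X fm gm by auto
  have eq: "{x\<in>X. f x \<noteq> g x} = {x\<in>X. f x \<noteq> indicator X x * g x}" by auto
  have "{x\<in>X. f x \<noteq> g x} \<in> sets borel" unfolding eq by measurable
  then have sm: "{x\<in>X. f x \<noteq> g x} \<in> sets mu" using DeltaD[OF mu] by simp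
  show ?thesis
    using ae AE_iff_measurable[OF sm, of "\<lambda>x. x \<in> X \<longrightarrow> f x = g x"] DeltaD(4)[OF mu] by auto
qed

theorem lemma1:
  fixes X :: "real set" and \<theta>l \<theta>h :: real
    and u :: "real \<Rightarrow> real"
    and C :: "real \<Rightarrow> real measure \<Rightarrow> real"
    and DC :: "real \<Rightarrow> real measure \<Rightarrow> real"
    and w :: "real \<Rightarrow> real \<Rightarrow> real" and \<mu> :: "real \<Rightarrow> real measure"
  assumes X: "finite X \<or> (\<exists>a b. a \<le> b \<and> X = {a..b})"
    and u_mono: "strict_mono u" and u_cont: "continuous_on UNIV u"
    and u_conc: "concave_on UNIV u"
    and C_bdd: "\<exists>B. \<forall>\<theta>\<in>{\<theta>l..\<theta>h}. \<forall>M\<in>Delta X. \<bar>C \<theta> M\<bar> \<le> B"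
    and C_cont: "\<forall>\<theta>\<in>{\<theta>l..\<theta>h}. \<forall>Ms M. (\<forall>n. Ms n \<in> Delta X) \<longrightarrow> M \<in> Delta X
                    \<longrightarrow> weak_conv_on X Ms M \<longrightarrow> (\<lambda>n. C \<theta> (Ms n)) \<longlonglongrightarrow> C \<theta> M"
    and C_convex: "\<forall>\<theta>\<in>{\<theta>l..\<theta>h}. \<forall>M\<in>Delta X. \<forall>N\<in>Delta X. \<forall>t\<in>{0..1}.
                    C \<theta> (mix t M N) \<le> (1 - t) * C \<theta> M + t * C \<theta> N"
    and C_fosd: "\<forall>\<theta>\<in>{\<theta>l..\<theta>h}. \<forall>M\<in>Delta X. \<forall>N\<in>Delta X. fosd N M \<longrightarrow> C \<theta> N \<ge> C \<theta> M"
    and C_gateaux: "\<forall>\<theta>\<in>{\<theta>l..\<theta>h}. \<forall>M\<in>Delta X. \<exists>c. continuous_on X c \<and>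
                    (\<forall>N\<in>Delta X. ((\<lambda>\<epsilon>. (C \<theta> (mix \<epsilon> M N) - C \<theta> M) / \<epsilon>)
                        \<longlongrightarrow> (LINT x:X|N. c x) - (LINT x:X|M. c x)) (at_right 0))"
    and C_decr: "\<forall>M\<in>Delta X. strict_antimono_on {\<theta>l..\<theta>h} (\<lambda>\<theta>. C \<theta> M)"
    and C_deriv: "\<forall>M\<in>Delta X. \<forall>\<theta>\<in>{\<theta>l..\<theta>h}.
                    ((\<lambda>t. C t M) has_real_derivative DC \<theta> M) (at \<theta> within {\<theta>l..\<theta>h})"
    and DC_cont: "\<forall>M\<in>Delta X. continuous_on {\<theta>l..\<theta>h} (\<lambda>\<theta>. DC \<theta> M)"
    and DC_bdd: "\<forall>\<theta>\<in>{\<theta>l..\<theta>h}. \<exists>B. \<forall>M\<in>Delta X. \<bar>DC \<theta> M\<bar> \<le> B"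
    and IC: "incentive_compatible X u C {\<theta>l..\<theta>h} w \<mu>"
  shows "\<exists>wb :: real \<Rightarrow> real \<Rightarrow> real.
           (\<forall>\<theta>\<in>{\<theta>l..\<theta>h}. mono_on X (wb \<theta>)
              \<and> (\<forall>x\<in>X. continuous (at x within (X \<inter> {x..})) (wb \<theta>)))
         \<and> incentive_compatible X u C {\<theta>l..\<theta>h} wb \<mu>
         \<and> (\<forall>\<theta>\<in>{\<theta>l..\<theta>h}. emeasure (\<mu> \<theta>) {x\<in>X. wb \<theta> x \<noteq> w \<theta> x} = 0)"
proof -
  have mech: "mechanism X {\<theta>l..\<theta>h} w \<mu>"
    and icw: "\<And>\<theta> \<theta>' M'. \<theta> \<in> {\<theta>l..\<theta>h} \<Longrightarrow> \<theta>' \<in> {\<theta>l..\<theta>h} \<Longrightarrow> M' \<in> Delta X \<Longrightarrow>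
        Util X u C \<theta> (w \<theta>') M' \<le> Util X u C \<theta> (w \<theta>) (\<mu> \<theta>)"
    using IC by (auto simp: incentive_compatible_def)
  have Xc: "compact X" using X by (auto intro: finite_imp_compact)
  have Xb: "X \<in> sets borel" using Xc by (simp add: compact_imp_closed borel_closed)
  show ?thesis
  proof (cases "X = {}")
    case True
    then show ?thesis using IC by (intro exI[of _ w]) (auto simp: mono_on_def)
  next
    case False
    obtain a where aX: "a \<in> X" and amin: "\<And>y. y \<in> X \<Longrightarrow> a \<le> y"
      using compact_attains_inf[OF Xc False] by blast
    have wmeas: "(\<lambda>x. indicator X x * w \<theta> x) \<in> borel_measurable borel" if "\<theta> \<in> {\<theta>l..\<theta>h}" for \<theta>
      using mech that ind_meas[OF Xb] by (auto simp: mechanism_def)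
    have wbd: "\<exists>B. \<forall>x\<in>X. w \<theta> x \<le> B" if "\<theta> \<in> {\<theta>l..\<theta>h}" for \<theta>
      using mech that by (auto simp: mechanism_def)
    have muD: "\<mu> \<theta> \<in> Delta X" if "\<theta> \<in> {\<theta>l..\<theta>h}" for \<theta>
      using mech that by (auto simp: mechanism_def)
    have umono: "mono u" using u_mono strict_mono_mono by blast
    have constr: "\<exists>S R. constr_ok X a (w \<theta>) S R" if th: "\<theta> \<in> {\<theta>l..\<theta>h}" for \<theta>
    proof -
      obtain B where B: "\<forall>x\<in>X. w \<theta> x \<le> B" using wbd[OF th] by blast
      from X show ?thesis
      proof
        assume "finite X"
        then show ?thesis by (rule constr_finite[OF _ aX amin]) (use B in auto)
      next
        assume "\<exists>a b. a \<le> b \<and> X = {a..b}"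
        then obtain a' b where ab: "a' \<le> b" "X = {a'..b}" by blast
        have "a = a'" using aX amin[of a'] ab by auto
        then show ?thesis using constr_interval[OF ab(2) ab(1), of "w \<theta>" B] B by auto
      qed
    qed
    define wb where "wb \<theta> = wbar X a (w \<theta>)" for \<theta>
    have props: "mono (wb \<theta>) \<and> (\<forall>x. continuous (at x within {x..}) (wb \<theta>)) \<and> (\<forall>x. w \<theta> a \<le> wb \<theta> x)
        \<and> (\<exists>B. \<forall>x. wb \<theta> x \<le> B)" if th: "\<theta> \<in> {\<theta>l..\<theta>h}" for \<theta>
    proof -
      obtain B where B: "\<forall>x\<in>X. w \<theta> x \<le> B" using wbd[OF th] by blast
      interpret wb_setup X a B "w \<theta>" by standard (use aX amin B in auto)
      show ?thesis using W_mono W_rcont W_ge W_le_B unfolding wb_def by blast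
    qed
    have wbm: "wb \<theta> \<in> borel_measurable borel" if th: "\<theta> \<in> {\<theta>l..\<theta>h}" for \<theta>
      using props[OF th] borel_measurable_mono by blast
    have wbm_ind: "(\<lambda>x. indicator X x * wb \<theta> x) \<in> borel_measurable borel" if th: "\<theta> \<in> {\<theta>l..\<theta>h}" for \<theta>
      using wbm[OF th] Xb by measurable
    have ae: "AE x in \<mu> \<theta>. x \<in> X \<longrightarrow> wb \<theta> x = w \<theta> x" if th: "\<theta> \<in> {\<theta>l..\<theta>h}" for \<theta>
    proof -
      obtain B where B: "\<forall>x\<in>X. w \<theta> x \<le> B" using wbd[OF th] by blast
      show ?thesis unfolding wb_def
      proof (rule ae_lemma[OF Xb Xc aX amin muD[OF th] wmeas[OF th] _ u_mono u_cont])
        show "w \<theta> x \<le> B" if "x \<in> X" for x using B that by blast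
        show "Util X u C \<theta> (w \<theta>) N \<le> Util X u C \<theta> (w \<theta>) (\<mu> \<theta>)" if "N \<in> Delta X" for N
          using icw[OF th th that] .
        show "\<exists>c. continuous_on X c \<and>
                    (\<forall>N\<in>Delta X. ((\<lambda>\<epsilon>. (C \<theta> (mix \<epsilon> (\<mu> \<theta>) N) - C \<theta> (\<mu> \<theta>)) / \<epsilon>)
                        \<longlongrightarrow> (LINT x:X|N. c x) - (LINT x:X|\<mu> \<theta>. c x)) (at_right 0))"
          using C_gateaux th muD[OF th] by blast
        show "C \<theta> M \<le> C \<theta> N" if "M \<in> Delta X" "N \<in> Delta X" "fosd N M" for M N
          using C_fosd th that by blast
      qed
    qed
    have extq: "ext_int X (\<mu> \<theta>) (\<lambda>x. u (wb \<theta> x)) = ext_int X (\<mu> \<theta>) (\<lambda>x. u (w \<theta> x))"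
      if th: "\<theta> \<in> {\<theta>l..\<theta>h}" for \<theta>
      by (rule ext_eq[OF Xb muD[OF th] ind_meas_u[OF Xb wbm_ind[OF th] u_cont]
            ind_meas_u[OF Xb wmeas[OF th] u_cont] ae[OF th]])
    have safe: "Util X u C \<theta> (wb \<theta>') M \<le> Util X u C \<theta> (w \<theta>) (\<mu> \<theta>)"
      if th: "\<theta> \<in> {\<theta>l..\<theta>h}" and th': "\<theta>' \<in> {\<theta>l..\<theta>h}" and M: "M \<in> Delta X" for \<theta> \<theta>' M
    proof -
      obtain S R where SR: "constr_ok X a (w \<theta>') S R" using constr[OF th'] by blast
      obtain B where B: "\<forall>x\<in>X. w \<theta>' x \<le> B" using wbd[OF th'] by blast
      obtain B' where B': "\<forall>x. wb \<theta>' x \<le> B'" using props[OF th'] by blast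
      show ?thesis unfolding Util_def
      proof (rule safety[OF Xb Xc M, where w="w \<theta>'" and S=S and R=R and B=B and L="w \<theta>' a" and B'=B'
          and Cf="C \<theta>" and f="wb \<theta>'" and u=u and U="ext_int X (\<mu> \<theta>) (\<lambda>x. u (w \<theta> x)) - ereal (C \<theta> (\<mu> \<theta>))"])
        show "(\<lambda>n. C \<theta> (Ms n)) \<longlonglongrightarrow> C \<theta> N"
          if "\<forall>n. Ms n \<in> Delta X" "N \<in> Delta X" "weak_conv_on X Ms N" for Ms N
          using C_cont th that by blast
        show "C \<theta> M \<le> C \<theta> N" if "M \<in> Delta X" "N \<in> Delta X" "fosd N M" for M N
          using C_fosd th that by blast
        show "ext_int X N (\<lambda>x. u (w \<theta>' x)) - ereal (C \<theta> N) \<le> ext_int X (\<mu> \<theta>) (\<lambda>x. u (w \<theta> x)) - ereal (C \<theta> (\<mu> \<theta>))"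
          if "N \<in> Delta X" for N
          using icw[OF th th' that] by (simp add: Util_def)
      qed (use wmeas[OF th'] B B' u_cont umono props[OF th'] SR in \<open>auto simp: constr_ok_def wb_def\<close>)
    qed
    show ?thesis
    proof (intro exI[of _ wb] conjI ballI)
      fix \<theta> assume th: "\<theta> \<in> {\<theta>l..\<theta>h}"
      show "mono_on X (wb \<theta>)" using props[OF th] by (auto simp: mono_on_def mono_def)
      show "continuous (at x within (X \<inter> {x..})) (wb \<theta>)" if "x \<in> X" for x
        using props[OF th] continuous_within_subset[of x "{x..}" "wb \<theta>" "X \<inter> {x..}"] by blast
    next
      fix \<theta> assume th: "\<theta> \<in> {\<theta>l..\<theta>h}"
      show "emeasure (\<mu> \<theta>) {x\<in>X. wb \<theta> x \<noteq> w \<theta> x} = 0"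
        by (rule null_lemma[OF Xb muD[OF th] wbm[OF th] wmeas[OF th] ae[OF th]])
    next
      show "incentive_compatible X u C {\<theta>l..\<theta>h} wb \<mu>"
        unfolding incentive_compatible_def mechanism_def
      proof (intro conjI ballI)
        fix \<theta> assume th: "\<theta> \<in> {\<theta>l..\<theta>h}"
        show "wb \<theta> \<in> borel_measurable (restrict_space borel X)"
          by (rule measurable_restrict_space1[OF wbm[OF th]])
        show "\<exists>B. \<forall>x\<in>X. wb \<theta> x \<le> B" using props[OF th] by blast
        show "\<mu> \<theta> \<in> Delta X" by (rule muD[OF th])
      next
        fix \<theta> \<theta>' M' assume th: "\<theta> \<in> {\<theta>l..\<theta>h}" and th': "\<theta>' \<in> {\<theta>l..\<theta>h}" and M: "M' \<in> Delta X"
        have "Util X u C \<theta> (wb \<theta>') M' \<le> Util X u C \<theta> (w \<theta>) (\<mu> \<theta>)" by (rule safe[OF th th' M])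
        also have "\<dots> = Util X u C \<theta> (wb \<theta>) (\<mu> \<theta>)" using extq[OF th] by (simp add: Util_def)
        finally show "Util X u C \<theta> (wb \<theta>') M' \<le> Util X u C \<theta> (wb \<theta>) (\<mu> \<theta>)" .
      qed
    qed
  qed
qed

end
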